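(* Let $G$ be a finitely presented group, $A$ an abelian group and $B$ a group with trivial center. There is a surjective homomorphism $G\times A\to B\times A$ if and only if there is a surjective homomorphism $G\to B$. *)

theory Defs
  imports "HOL-Algebra.Algebra"
begin

text \<open>Words over generators (natural numbers); a letter (x, True) denotes the
  inverse of generator x, (x, False) the generator itself.\<close>

type_synonym word = "(nat \<times> bool) list"

fun letter_eval :: "('g, 'm) monoid_scheme \<Rightarrow> (nat \<Rightarrow> 'g) \<Rightarrow> nat \<times> bool \<Rightarrow> 'g" where
  "letter_eval G f (x, b) = (if b then inv\<^bsub>G\<^esub> (f x) else f x)"

definition word_eval :: "('g, 'm) monoid_scheme \<Rightarrow> (nat \<Rightarrow> 'g) \<Rightarrow> word \<Rightarrow> 'g" where
  "word_eval G f w = foldr (\<lambda>l acc. letter_eval G f l \<otimes>\<^bsub>G\<^esub> acc) w \<one>\<^bsub>G\<^esub>"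

inductive pres_step :: "word set \<Rightarrow> word \<Rightarrow> word \<Rightarrow> bool" for R where
  cancel: "pres_step R (u @ [(x, b), (x, \<not> b)] @ v) (u @ v)"
| relator: "r \<in> R \<Longrightarrow> pres_step R (u @ r @ v) (u @ v)"

text \<open>Equality in the presented group F(X)/<<R>>: the equivalence relation
  generated by the reduction steps.\<close>

definition pres_equiv :: "word set \<Rightarrow> word \<Rightarrow> word \<Rightarrow> bool" where
  "pres_equiv R = (symclp (pres_step R))\<^sup>*\<^sup>*"

text \<open>G is finitely presented: there are finitely many generators X and
  finitely many relators R (words over X) and an assignment f of the generators
  to elements of G inducing an isomorphism F(X)/<<R>> \<cong> G, i.e. the induced map
  is surjective and a word is trivial in G iff it is trivial in F(X)/<<R>>.\<close>

definition finitely_presented :: "('g, 'm) monoid_scheme \<Rightarrow> bool" where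
  "finitely_presented G \<longleftrightarrow>
     (\<exists>(Gens :: nat set) (Rels :: word set) (f :: nat \<Rightarrow> 'g).
        finite Gens \<and> finite Rels \<and> (\<forall>r\<in>Rels. set r \<subseteq> Gens \<times> UNIV) \<and>
        f ` Gens \<subseteq> carrier G \<and>
        (\<forall>g\<in>carrier G. \<exists>w. set w \<subseteq> Gens \<times> UNIV \<and> word_eval G f w = g) \<and>
        (\<forall>w. set w \<subseteq> Gens \<times> UNIV \<longrightarrow> (word_eval G f w = \<one>\<^bsub>G\<^esub> \<longleftrightarrow> pres_equiv Rels w [])))"

definition trivial_center :: "('g, 'm) monoid_scheme \<Rightarrow> bool" where
  "trivial_center B \<longleftrightarrow>
     (\<forall>z\<in>carrier B. (\<forall>y\<in>carrier B. z \<otimes>\<^bsub>B\<^esub> y = y \<otimes>\<^bsub>B\<^esub> z) \<longrightarrow> z = \<one>\<^bsub>B\<^esub>)"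

end

theory Submission
  imports Defs
begin

theorem lemma7p21:
  fixes G :: "('g, 'm) monoid_scheme" and A :: "('a, 'n) monoid_scheme"
    and B :: "('b, 'k) monoid_scheme"
  assumes "group G" and "finitely_presented G"
    and "comm_group A"
    and "group B" and "trivial_center B"
  shows "(\<exists>h. h \<in> epi (G \<times>\<times> A) (B \<times>\<times> A)) \<longleftrightarrow> (\<exists>h. h \<in> epi G B)"
proof
  interpret G: group G by fact
  interpret A: comm_group A by fact
  interpret B: group B by fact
  assume "\<exists>h. h \<in> epi (G \<times>\<times> A) (B \<times>\<times> A)"
  then obtain h where h: "h \<in> epi (G \<times>\<times> A) (B \<times>\<times> A)" by blast
  have hc: "\<And>g a. g \<in> carrier G \<Longrightarrow> a \<in> carrier A \<Longrightarrow> h (g, a) \<in> carrier B \<times> carrier A"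
    using h by (auto simp: epi_def hom_def Pi_def)
  have hm: "\<And>g a g' a'. g \<in> carrier G \<Longrightarrow> a \<in> carrier A \<Longrightarrow> g' \<in> carrier G \<Longrightarrow> a' \<in> carrier A
     \<Longrightarrow> h (g \<otimes>\<^bsub>G\<^esub> g', a \<otimes>\<^bsub>A\<^esub> a') = h (g, a) \<otimes>\<^bsub>B \<times>\<times> A\<^esub> h (g', a')"
    using h unfolding epi_def hom_def by (auto simp flip: mult_DirProd)
  have hm1: "\<And>g a g' a'. g \<in> carrier G \<Longrightarrow> a \<in> carrier A \<Longrightarrow> g' \<in> carrier G \<Longrightarrow> a' \<in> carrier A
     \<Longrightarrow> fst (h (g \<otimes>\<^bsub>G\<^esub> g', a \<otimes>\<^bsub>A\<^esub> a')) = fst (h (g, a)) \<otimes>\<^bsub>B\<^esub> fst (h (g', a'))"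
    using hm by (simp add: mult_DirProd')
  have hs: "\<And>b. b \<in> carrier B \<Longrightarrow> \<exists>g a. g \<in> carrier G \<and> a \<in> carrier A \<and> fst (h (g, a)) = b"
  proof -
    fix b assume "b \<in> carrier B"
    then have "(b, \<one>\<^bsub>A\<^esub>) \<in> h ` carrier (G \<times>\<times> A)" using h by (simp add: epi_def)
    then show "\<exists>g a. g \<in> carrier G \<and> a \<in> carrier A \<and> fst (h (g, a)) = b"
      by (auto, metis fst_conv)
  qed
  have central: "\<And>a. a \<in> carrier A \<Longrightarrow> fst (h (\<one>\<^bsub>G\<^esub>, a)) = \<one>\<^bsub>B\<^esub>"
  proof -
    fix a assume a: "a \<in> carrier A"
    have zc: "fst (h (\<one>\<^bsub>G\<^esub>, a)) \<in> carrier B" using hc[of "\<one>\<^bsub>G\<^esub>" a] a by auto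
    show "fst (h (\<one>\<^bsub>G\<^esub>, a)) = \<one>\<^bsub>B\<^esub>"
      using assms(5) unfolding trivial_center_def
    proof (elim ballE impE)
      show "\<forall>y\<in>carrier B. fst (h (\<one>\<^bsub>G\<^esub>, a)) \<otimes>\<^bsub>B\<^esub> y = y \<otimes>\<^bsub>B\<^esub> fst (h (\<one>\<^bsub>G\<^esub>, a))"
      proof
        fix y assume "y \<in> carrier B"
        then obtain g' a' where g': "g' \<in> carrier G" "a' \<in> carrier A" "fst (h (g', a')) = y"
          using hs by blast
        have "fst (h (\<one>\<^bsub>G\<^esub>, a)) \<otimes>\<^bsub>B\<^esub> y = fst (h (\<one>\<^bsub>G\<^esub> \<otimes>\<^bsub>G\<^esub> g', a \<otimes>\<^bsub>A\<^esub> a'))"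
          using hm1[of "\<one>\<^bsub>G\<^esub>" a g' a'] g' a by simp
        also have "\<dots> = fst (h (g' \<otimes>\<^bsub>G\<^esub> \<one>\<^bsub>G\<^esub>, a' \<otimes>\<^bsub>A\<^esub> a))"
          using g' a A.m_comm by simp
        also have "\<dots> = y \<otimes>\<^bsub>B\<^esub> fst (h (\<one>\<^bsub>G\<^esub>, a))"
          using hm1[of g' a' "\<one>\<^bsub>G\<^esub>" a] g' a by simp
        finally show "fst (h (\<one>\<^bsub>G\<^esub>, a)) \<otimes>\<^bsub>B\<^esub> y = y \<otimes>\<^bsub>B\<^esub> fst (h (\<one>\<^bsub>G\<^esub>, a))" .
      qed
    qed (use zc in auto)
  qed
  define k where "k = (\<lambda>g. fst (h (g, \<one>\<^bsub>A\<^esub>)))"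
  have "k \<in> epi G B"
    unfolding epi_iff_subset
  proof
    show "k \<in> hom G B"
      unfolding hom_def k_def using hc hm1[where a="\<one>\<^bsub>A\<^esub>" and a'="\<one>\<^bsub>A\<^esub>"]
      by (auto simp: Pi_def mem_Times_iff)
    show "carrier B \<subseteq> k ` carrier G"
    proof
      fix b assume "b \<in> carrier B"
      then obtain g a where ga: "g \<in> carrier G" "a \<in> carrier A" "fst (h (g, a)) = b"
        using hs by blast
      have "b = fst (h (g \<otimes>\<^bsub>G\<^esub> \<one>\<^bsub>G\<^esub>, \<one>\<^bsub>A\<^esub> \<otimes>\<^bsub>A\<^esub> a))" using ga by simp
      also have "\<dots> = k g \<otimes>\<^bsub>B\<^esub> \<one>\<^bsub>B\<^esub>"
        using hm1[of g "\<one>\<^bsub>A\<^esub>" "\<one>\<^bsub>G\<^esub>" a] ga central[of a] unfolding k_def by simp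
      also have "\<dots> = k g" using hc[of g "\<one>\<^bsub>A\<^esub>"] ga unfolding k_def by (auto simp: mem_Times_iff)
      finally show "b \<in> k ` carrier G" using ga by blast
    qed
  qed
  then show "\<exists>h. h \<in> epi G B" by blast
next
  interpret G: group G by fact
  interpret A: comm_group A by fact
  interpret B: group B by fact
  assume "\<exists>h. h \<in> epi G B"
  then obtain f where f: "f \<in> epi G B" by blast
  have "(\<lambda>(g, a). (f g, a)) \<in> epi (G \<times>\<times> A) (B \<times>\<times> A)"
    using f unfolding epi_def hom_def by (auto simp: Pi_def image_iff) (metis image_iff)
  then show "\<exists>h. h \<in> epi (G \<times>\<times> A) (B \<times>\<times> A)" by blast
qed

end
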